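(* Let $A>0$, $R>0$, $\sigma\in\mathbb{R}$, and let $\lambda_1$ be the first eigenvalue of the problem $$u''+2Au'+\lambda u=0 \text{ on }[0,R],\qquad u'(0)=0,\qquad u'(R)=-\sigma u(R).$$ (a) For all $R>0$: $\lambda_1\geq2\sigma A-\sigma^2$ if $0\le\sigma\le A$, and $\lambda_1\ge A^2$ if $\sigma\ge A$. (b) If $\sigma<0$, then for all $R>0$, $\lambda_1\leq-\sigma^2+2A\sigma$. (c) If $\sigma>A$, there are positive constants $R_0,c_0$ depending only on $A$ and $\sigma$ such that for all $R\ge R_0$, $\lambda_1\geq A^2+\frac{\pi^2}{R^2}-\frac{c_0}{R^3}$.
   Context: The problem is the Sturm–Liouville eigenvalue problem for $-u''-2Au'$ on $L^2([0,R],e^{2Ax}dx)$ with the stated boundary conditions; its spectrum is discrete and $\lambda_1$ is the smallest eigenvalue. *)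

theory Defs
  imports "HOL-Analysis.Analysis"
begin

definition is_eigenvalue :: "real \<Rightarrow> real \<Rightarrow> real \<Rightarrow> real \<Rightarrow> bool" where
  "is_eigenvalue A R \<sigma> lam \<longleftrightarrow>
     (\<exists>u u' :: real \<Rightarrow> real.
        (\<forall>x\<in>{0..R}. (u has_real_derivative u' x) (at x within {0..R})) \<and>
        (\<forall>x\<in>{0..R}. (u' has_real_derivative (- 2 * A * u' x - lam * u x)) (at x within {0..R})) \<and>
        u' 0 = 0 \<and> u' R = - \<sigma> * u R \<and>
        (\<exists>x\<in>{0..R}. u x \<noteq> 0))"

definition first_eigenvalue :: "real \<Rightarrow> real \<Rightarrow> real \<Rightarrow> real" where
  "first_eigenvalue A R \<sigma> = Inf {lam. is_eigenvalue A R \<sigma> lam}"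

end

theory Submission
  imports Defs
begin


lemma ode_unique:
  fixes z z' :: "real \<Rightarrow> real"
  assumes d1: "\<forall>x\<in>{0..R}. (z has_real_derivative z' x) (at x within {0..R})"
    and d2: "\<forall>x\<in>{0..R}. (z' has_real_derivative (- 2 * A * z' x - lam * z x)) (at x within {0..R})"
    and z0: "z 0 = 0" and z'0: "z' 0 = 0"
  shows "\<forall>x\<in>{0..R}. z x = 0 \<and> z' x = 0"
proof
  fix x assume x: "x \<in> {0..R}"
  define C where "C = \<bar>1 - lam\<bar> + 4 * \<bar>A\<bar>"
  define F where "F = (\<lambda>t. (z t ^ 2 + z' t ^ 2) * exp (- C * t))"
  define D where "D = (\<lambda>t. (2 * z t * z' t + 2 * z' t * (- 2 * A * z' t - lam * z t)) * exp (- C * t)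
      - (z t ^ 2 + z' t ^ 2) * (C * exp (- C * t)))"
  have der: "(F has_real_derivative D t) (at t within {0..x})" if "t \<in> {0..x}" for t
  proof -
    have t: "t \<in> {0..R}" using that x by auto
    have s: "{0..x} \<subseteq> {0..R}" using x by auto
    have a: "(z has_real_derivative z' t) (at t within {0..x})"
      using DERIV_subset[OF d1[rule_format, OF t] s] .
    have b: "(z' has_real_derivative (- 2 * A * z' t - lam * z t)) (at t within {0..x})"
      using DERIV_subset[OF d2[rule_format, OF t] s] .
    show ?thesis unfolding F_def D_def
      by (rule derivative_eq_intros a b refl | simp)+ 
  qed
  have Dle: "D t \<le> 0" for t
  proof -
    have e: "exp (- C * t) > 0" by simp
    have k1: "\<bar>2 * z t * z' t\<bar> \<le> z t ^ 2 + z' t ^ 2"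
    proof -
      have "0 \<le> (\<bar>z t\<bar> - \<bar>z' t\<bar>)^2" by simp
      then have "2 * \<bar>z t\<bar> * \<bar>z' t\<bar> \<le> \<bar>z t\<bar>^2 + \<bar>z' t\<bar>^2"
        unfolding power2_diff by linarith
      then show ?thesis by (simp add: abs_mult)
    qed
    have k2: "2 * z t * z' t * (1 - lam) \<le> \<bar>1 - lam\<bar> * (z t ^ 2 + z' t ^ 2)"
    proof -
      have "2 * z t * z' t * (1 - lam) \<le> \<bar>2 * z t * z' t\<bar> * \<bar>1 - lam\<bar>"
        by (metis abs_ge_self abs_mult)
      also have "\<dots> \<le> (z t ^ 2 + z' t ^ 2) * \<bar>1 - lam\<bar>"
        by (rule mult_right_mono[OF k1]) simp
      finally show ?thesis by (simp add: mult.commute)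
    qed
    have k3: "- 4 * A * z' t ^ 2 \<le> 4 * \<bar>A\<bar> * (z t ^ 2 + z' t ^ 2)"
    proof -
      have "- 4 * A * z' t ^ 2 \<le> 4 * \<bar>A\<bar> * z' t ^ 2"
        by (rule mult_right_mono) auto
      also have "\<dots> \<le> 4 * \<bar>A\<bar> * (z t ^ 2 + z' t ^ 2)"
        by (rule mult_left_mono) auto
      finally show ?thesis .
    qed
    have "(2 * z t * z' t + 2 * z' t * (- 2 * A * z' t - lam * z t)) - (z t ^ 2 + z' t ^ 2) * C \<le> 0"
      using k2 k3 unfolding C_def by (simp add: algebra_simps power2_eq_square)
    then have "((2 * z t * z' t + 2 * z' t * (- 2 * A * z' t - lam * z t)) - (z t ^ 2 + z' t ^ 2) * C) * exp (- C * t) \<le> 0"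
      using e by (simp add: mult_nonpos_nonneg)
    then show ?thesis unfolding D_def by (simp add: algebra_simps)
  qed
  have x0: "0 \<le> x" using x by auto
  obtain y where "y \<in> {0..x}" "F x - F 0 = D y * (x - 0)"
    using mvt_very_simple[OF x0, of F "\<lambda>t h. D t * h"] der
    unfolding has_field_derivative_def by auto
  then have "F x \<le> 0" using Dle[of y] x0 z0 z'0 unfolding F_def
    by (simp add: mult_nonpos_nonneg)
  then have "z x ^ 2 + z' x ^ 2 \<le> 0" unfolding F_def
    by (simp add: mult_le_0_iff)
  then show "z x = 0 \<and> z' x = 0"
    by (simp only: sum_power2_le_zero_iff)
qed



lemma eig_reduce:
  assumes ev: "is_eigenvalue A R \<sigma> lam"
    and p1: "\<forall>x\<in>{0..R}. (P has_real_derivative P' x) (at x within {0..R})"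
    and p2: "\<forall>x\<in>{0..R}. (P' has_real_derivative (- 2 * A * P' x - lam * P x)) (at x within {0..R})"
    and p0: "P 0 = 1" and p'0: "P' 0 = 0"
  shows "P' R = - \<sigma> * P R"
proof -
  obtain u u' where u1: "\<forall>x\<in>{0..R}. (u has_real_derivative u' x) (at x within {0..R})"
    and u2: "\<forall>x\<in>{0..R}. (u' has_real_derivative (- 2 * A * u' x - lam * u x)) (at x within {0..R})"
    and u'0: "u' 0 = 0" and uR: "u' R = - \<sigma> * u R" and nz: "\<exists>x\<in>{0..R}. u x \<noteq> 0"
    using ev unfolding is_eigenvalue_def by blast
  define z where "z = (\<lambda>t. u t - u 0 * P t)"
  define z' where "z' = (\<lambda>t. u' t - u 0 * P' t)"
  have z1: "\<forall>x\<in>{0..R}. (z has_real_derivative z' x) (at x within {0..R})"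
    unfolding z_def z'_def using u1 p1 by (auto intro!: derivative_eq_intros)
  have z2: "\<forall>x\<in>{0..R}. (z' has_real_derivative (- 2 * A * z' x - lam * z x)) (at x within {0..R})"
  proof
    fix x assume x: "x \<in> {0..R}"
    have "(z' has_real_derivative ((- 2 * A * u' x - lam * u x) - u 0 * (- 2 * A * P' x - lam * P x))) (at x within {0..R})"
      unfolding z'_def using u2 p2 x by (auto intro!: derivative_eq_intros)
    then show "(z' has_real_derivative (- 2 * A * z' x - lam * z x)) (at x within {0..R})"
      unfolding z_def z'_def by (simp add: algebra_simps)
  qed
  have R0: "0 \<le> R" using nz by auto
  have zz: "\<forall>x\<in>{0..R}. z x = 0 \<and> z' x = 0"
    by (rule ode_unique[OF z1 z2]) (auto simp: z_def z'_def p0 p'0 u'0)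
  have "u 0 \<noteq> 0"
  proof
    assume "u 0 = 0"
    then have "\<forall>x\<in>{0..R}. u x = 0" using zz unfolding z_def by auto
    then show False using nz by auto
  qed
  moreover have "z R = 0 \<and> z' R = 0" using zz R0 by auto
  then have "u' R = u 0 * P' R" "u R = u 0 * P R" unfolding z_def z'_def by auto
  ultimately have "u 0 * P' R = u 0 * (- \<sigma> * P R)" "u 0 \<noteq> 0" using uR by (auto simp: algebra_simps)
  then show ?thesis using mult_left_cancel[of "u 0" "P' R" "- \<sigma> * P R"] by blast
qed

lemma eig_intro:
  assumes R0: "0 \<le> R"
    and p1: "\<forall>x\<in>{0..R}. (P has_real_derivative P' x) (at x within {0..R})"
    and p2: "\<forall>x\<in>{0..R}. (P' has_real_derivative (- 2 * A * P' x - lam * P x)) (at x within {0..R})"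
    and p0: "P 0 = 1" and p'0: "P' 0 = 0" and pR: "P' R = - \<sigma> * P R"
  shows "is_eigenvalue A R \<sigma> lam"
  unfolding is_eigenvalue_def
  by (rule exI[of _ P], rule exI[of _ P']) (use assms in force)

definition Ph :: "real \<Rightarrow> real \<Rightarrow> real \<Rightarrow> real" where
  "Ph A k x = exp (- A * x) * (cosh (k * x) + A / k * sinh (k * x))"
definition Ph' :: "real \<Rightarrow> real \<Rightarrow> real \<Rightarrow> real" where
  "Ph' A k x = exp (- A * x) * ((k^2 - A^2) / k) * sinh (k * x)"
definition Pt :: "real \<Rightarrow> real \<Rightarrow> real \<Rightarrow> real" where
  "Pt A k x = exp (- A * x) * (cos (k * x) + A / k * sin (k * x))"
definition Pt' :: "real \<Rightarrow> real \<Rightarrow> real \<Rightarrow> real" where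
  "Pt' A k x = - exp (- A * x) * ((k^2 + A^2) / k) * sin (k * x)"
definition Pc :: "real \<Rightarrow> real \<Rightarrow> real" where
  "Pc A x = exp (- A * x) * (1 + A * x)"
definition Pc' :: "real \<Rightarrow> real \<Rightarrow> real" where
  "Pc' A x = - (A * A * x * exp (- A * x))"

lemma Ph_d1: "k \<noteq> 0 \<Longrightarrow> (Ph A k has_real_derivative Ph' A k x) (at x within S)"
  unfolding Ph_def Ph'_def
  by (rule derivative_eq_intros refl | simp)+ (simp add: field_simps power2_eq_square)

lemma Ph_d2: "k \<noteq> 0 \<Longrightarrow> (Ph' A k has_real_derivative (- 2 * A * Ph' A k x - (A^2 - k^2) * Ph A k x)) (at x within S)"
  unfolding Ph_def Ph'_def
  by (rule derivative_eq_intros refl | simp)+ (simp add: field_simps power2_eq_square)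

lemma Pt_d1: "k \<noteq> 0 \<Longrightarrow> (Pt A k has_real_derivative Pt' A k x) (at x within S)"
  unfolding Pt_def Pt'_def
  by (rule derivative_eq_intros refl | simp)+ (simp add: field_simps power2_eq_square)

lemma Pt_d2: "k \<noteq> 0 \<Longrightarrow> (Pt' A k has_real_derivative (- 2 * A * Pt' A k x - (A^2 + k^2) * Pt A k x)) (at x within S)"
  unfolding Pt_def Pt'_def
  by (rule derivative_eq_intros refl | simp)+ (simp add: field_simps power2_eq_square)

lemma Pc_d1: "(Pc A has_real_derivative Pc' A x) (at x within S)"
  unfolding Pc_def Pc'_def
  by (rule derivative_eq_intros refl | simp)+ (simp add: field_simps power2_eq_square)

lemma Pc_d2: "(Pc' A has_real_derivative (- 2 * A * Pc' A x - A^2 * Pc A x)) (at x within S)"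
  unfolding Pc_def Pc'_def
  by (rule derivative_eq_intros refl | simp)+ (simp add: field_simps power2_eq_square)



definition Hf :: "real \<Rightarrow> real \<Rightarrow> real \<Rightarrow> real \<Rightarrow> real" where
  "Hf A \<sigma> R k = \<sigma> * k * cosh (k * R) + (k^2 - A^2 + \<sigma> * A) * sinh (k * R)"
definition Jf :: "real \<Rightarrow> real \<Rightarrow> real \<Rightarrow> real \<Rightarrow> real" where
  "Jf A \<sigma> R k = \<sigma> * k * cos (k * R) - (k^2 + A^2 - \<sigma> * A) * sin (k * R)"

lemma Ph_bc: "k \<noteq> 0 \<Longrightarrow> Ph' A k R + \<sigma> * Ph A k R = exp (- A * R) / k * Hf A \<sigma> R k"
  by (simp add: Ph_def Ph'_def Hf_def field_simps power2_eq_square)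
lemma Pt_bc: "k \<noteq> 0 \<Longrightarrow> Pt' A k R + \<sigma> * Pt A k R = exp (- A * R) / k * Jf A \<sigma> R k"
  by (simp add: Pt_def Pt'_def Jf_def field_simps power2_eq_square)
lemma Pc_bc: "Pc' A R + \<sigma> * Pc A R = exp (- A * R) * (\<sigma> + (\<sigma> - A) * A * R)"
  by (simp add: Pc_def Pc'_def field_simps power2_eq_square)

lemma char_hyp:
  assumes ev: "is_eigenvalue A R \<sigma> lam" and l: "lam < A^2"
  shows "Hf A \<sigma> R (sqrt (A^2 - lam)) = 0"
proof -
  define k where "k = sqrt (A^2 - lam)"
  have k0: "k > 0" unfolding k_def using l by simp
  have lk: "lam = A^2 - k^2" unfolding k_def using l by simp
  have "Ph' A k R = - \<sigma> * Ph A k R"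
  proof -
    have d1: "\<forall>x\<in>{0..R}. (Ph A k has_real_derivative Ph' A k x) (at x within {0..R})" using Ph_d1 k0 by auto
    have d2: "\<forall>x\<in>{0..R}. (Ph' A k has_real_derivative (- 2 * A * Ph' A k x - lam * Ph A k x)) (at x within {0..R})" using Ph_d2 k0 lk by auto
    have "Ph A k 0 = 1" "Ph' A k 0 = 0" by (simp_all add: Ph_def Ph'_def)
    then show ?thesis using eig_reduce[OF ev d1 d2] by blast
  qed
  then have "exp (- A * R) / k * Hf A \<sigma> R k = 0" using Ph_bc[of k A R \<sigma>] k0 by simp
  then show ?thesis using k0 unfolding k_def by simp
qed

lemma char_trig:
  assumes ev: "is_eigenvalue A R \<sigma> lam" and l: "lam > A^2"
  shows "Jf A \<sigma> R (sqrt (lam - A^2)) = 0"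
proof -
  define k where "k = sqrt (lam - A^2)"
  have k0: "k > 0" unfolding k_def using l by simp
  have lk: "lam = A^2 + k^2" unfolding k_def using l by simp
  have "Pt' A k R = - \<sigma> * Pt A k R"
  proof -
    have d1: "\<forall>x\<in>{0..R}. (Pt A k has_real_derivative Pt' A k x) (at x within {0..R})" using Pt_d1 k0 by auto
    have d2: "\<forall>x\<in>{0..R}. (Pt' A k has_real_derivative (- 2 * A * Pt' A k x - lam * Pt A k x)) (at x within {0..R})" using Pt_d2 k0 lk by auto
    have "Pt A k 0 = 1" "Pt' A k 0 = 0" by (simp_all add: Pt_def Pt'_def)
    then show ?thesis using eig_reduce[OF ev d1 d2] by blast
  qed
  then have "exp (- A * R) / k * Jf A \<sigma> R k = 0" using Pt_bc[of k A R \<sigma>] k0 by simp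
  then show ?thesis using k0 unfolding k_def by simp
qed

lemma char_crit:
  assumes ev: "is_eigenvalue A R \<sigma> (A^2)"
  shows "\<sigma> + (\<sigma> - A) * A * R = 0"
proof -
  have "Pc' A R = - \<sigma> * Pc A R"
  proof -
    have d1: "\<forall>x\<in>{0..R}. (Pc A has_real_derivative Pc' A x) (at x within {0..R})" using Pc_d1 by auto
    have d2: "\<forall>x\<in>{0..R}. (Pc' A has_real_derivative (- 2 * A * Pc' A x - A^2 * Pc A x)) (at x within {0..R})" using Pc_d2 by auto
    have "Pc A 0 = 1" "Pc' A 0 = 0" by (simp_all add: Pc_def Pc'_def)
    then show ?thesis using eig_reduce[OF ev d1 d2] by blast
  qed
  then have "exp (- A * R) * (\<sigma> + (\<sigma> - A) * A * R) = 0" using Pc_bc[of A R \<sigma>] by simp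
  then show ?thesis by simp
qed

lemma intro_hyp:
  assumes R: "0 \<le> R" and k0: "k > 0" and H: "Hf A \<sigma> R k = 0"
  shows "is_eigenvalue A R \<sigma> (A^2 - k^2)"
proof (rule eig_intro[OF R, of "Ph A k" "Ph' A k"])
  have "Ph' A k R + \<sigma> * Ph A k R = 0" using Ph_bc[of k A R \<sigma>] k0 H by simp
  then show "Ph' A k R = - \<sigma> * Ph A k R" by simp
next
  show "\<forall>x\<in>{0..R}. (Ph A k has_real_derivative Ph' A k x) (at x within {0..R})" using Ph_d1 k0 by auto
next
  show "\<forall>x\<in>{0..R}. (Ph' A k has_real_derivative (- 2 * A * Ph' A k x - (A^2 - k^2) * Ph A k x)) (at x within {0..R})" using Ph_d2 k0 by auto
qed (simp_all add: Ph_def Ph'_def)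

lemma intro_trig:
  assumes R: "0 \<le> R" and k0: "k > 0" and H: "Jf A \<sigma> R k = 0"
  shows "is_eigenvalue A R \<sigma> (A^2 + k^2)"
proof (rule eig_intro[OF R, of "Pt A k" "Pt' A k"])
  have "Pt' A k R + \<sigma> * Pt A k R = 0" using Pt_bc[of k A R \<sigma>] k0 H by simp
  then show "Pt' A k R = - \<sigma> * Pt A k R" by simp
next
  show "\<forall>x\<in>{0..R}. (Pt A k has_real_derivative Pt' A k x) (at x within {0..R})" using Pt_d1 k0 by auto
next
  show "\<forall>x\<in>{0..R}. (Pt' A k has_real_derivative (- 2 * A * Pt' A k x - (A^2 + k^2) * Pt A k x)) (at x within {0..R})" using Pt_d2 k0 by auto
qed (simp_all add: Pt_def Pt'_def)



lemma ev_exists: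
  assumes R: "R > 0"
  shows "\<exists>lam. is_eigenvalue A R \<sigma> lam"
proof -
  define a where "a = pi / R"
  define b where "b = 2 * pi / R"
  have ab: "a \<le> b" "0 < a" unfolding a_def b_def using R by (auto simp: divide_right_mono)
  have Ja: "Jf A \<sigma> R a = - \<sigma> * a" unfolding Jf_def a_def using R by simp
  have Jb: "Jf A \<sigma> R b = \<sigma> * b" unfolding Jf_def b_def using R by simp
  have cont: "continuous_on {a..b} (Jf A \<sigma> R)"
    unfolding Jf_def by (intro continuous_intros)
  have "\<exists>k. a \<le> k \<and> k \<le> b \<and> Jf A \<sigma> R k = 0"
  proof (cases "\<sigma> \<ge> 0")
    case True
    then show ?thesis using IVT'[of "Jf A \<sigma> R" a 0 b, OF _ _ ab(1) cont] Ja Jb ab by auto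
  next
    case False
    then show ?thesis using IVT2'[of "Jf A \<sigma> R" b 0 a, OF _ _ ab(1) cont] Ja Jb ab
      by (auto simp: mult_nonpos_nonneg mult_neg_pos less_imp_le)
  qed
  then obtain k where "a \<le> k" "Jf A \<sigma> R k = 0" by auto
  then show ?thesis using intro_trig[of R k A \<sigma>] ab R by auto
qed

lemma part_a1:
  assumes A: "A > 0" and R: "R > 0" and s1: "0 \<le> \<sigma>" and s2: "\<sigma> \<le> A"
    and ev: "is_eigenvalue A R \<sigma> lam"
  shows "2 * \<sigma> * A - \<sigma>^2 \<le> lam"
proof (cases "lam < A^2")
  case False
  have "2 * \<sigma> * A - \<sigma>^2 \<le> A^2"
  proof -
    have "2 * \<sigma> * A - \<sigma>^2 = A^2 - (A - \<sigma>)^2" by (simp add: power2_diff algebra_simps)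
    moreover have "0 \<le> (A - \<sigma>)^2" by simp
    ultimately show ?thesis by linarith
  qed
  then show ?thesis using False by simp
next
  case True
  define k where "k = sqrt (A^2 - lam)"
  have k0: "k > 0" unfolding k_def using True by simp
  have lk: "lam = A^2 - k^2" unfolding k_def using True by simp
  have H: "Hf A \<sigma> R k = 0" using char_hyp[OF ev True] unfolding k_def .
  have kle: "k \<le> A - \<sigma>"
  proof (rule ccontr)
    assume "\<not> k \<le> A - \<sigma>"
    then have kg: "k > A - \<sigma>" by simp
    define c where "c = cosh (k * R)"
    define s where "s = sinh (k * R)"
    have sp: "s > 0" unfolding s_def using k0 R by simp
    have sc: "s \<le> c" unfolding s_def c_def by (rule sinh_le_cosh_real)
    have ksq: "k^2 > (A - \<sigma>)^2" using kg s2 by (intro power_strict_mono) auto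
    have e1: "(k^2 - A^2 + \<sigma> * A) * s > (\<sigma>^2 - \<sigma> * A) * s"
      using ksq sp by (intro mult_strict_right_mono) (auto simp: power2_diff algebra_simps)
    have e2: "\<sigma> * k * c \<ge> \<sigma> * (A - \<sigma>) * s"
    proof -
      have "(A - \<sigma>) * s \<le> k * c"
        using kg sc sp s2 by (intro mult_mono) auto
      then show ?thesis using s1 by (simp add: mult.assoc mult_left_mono)
    qed
    have "Hf A \<sigma> R k > 0"
      using e1 e2 unfolding Hf_def c_def[symmetric] s_def[symmetric]
      by (simp add: algebra_simps power2_eq_square)
    then show False using H by simp
  qed
  have "k^2 \<le> (A - \<sigma>)^2" using kle k0 by (intro power_mono) auto
  moreover have "2 * \<sigma> * A - \<sigma>^2 = A^2 - (A - \<sigma>)^2" by (simp add: power2_diff algebra_simps)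
  ultimately show ?thesis using lk by linarith
qed

lemma part_a2:
  assumes A: "A > 0" and R: "R > 0" and s1: "A \<le> \<sigma>"
    and ev: "is_eigenvalue A R \<sigma> lam"
  shows "A^2 \<le> lam"
proof (rule ccontr)
  assume "\<not> A^2 \<le> lam"
  then have l: "lam < A^2" by simp
  define k where "k = sqrt (A^2 - lam)"
  have k0: "k > 0" unfolding k_def using l by simp
  have H: "Hf A \<sigma> R k = 0" using char_hyp[OF ev l] unfolding k_def .
  have sp: "sinh (k * R) > 0" using k0 R by simp
  have t1: "\<sigma> * k * cosh (k * R) > 0" using k0 A s1 by simp
  have "A * A \<le> \<sigma> * A" using s1 A by (intro mult_right_mono) auto
  moreover have "k * k > 0" using k0 by simp
  ultimately have "k^2 - A^2 + \<sigma> * A > 0" by (simp add: power2_eq_square)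
  then have t2: "(k^2 - A^2 + \<sigma> * A) * sinh (k * R) > 0" using sp by simp
  have "Hf A \<sigma> R k > 0" unfolding Hf_def using t1 t2 by simp
  then show False using H by simp
qed

lemma part_a2':
  assumes A: "A > 0" and R: "R > 0" and s1: "A \<le> \<sigma>"
    and ev: "is_eigenvalue A R \<sigma> lam"
  shows "A^2 < lam"
proof -
  have "A^2 \<le> lam" by (rule part_a2[OF A R s1 ev])
  moreover have "lam \<noteq> A^2"
  proof
    assume "lam = A^2"
    then have "\<sigma> + (\<sigma> - A) * A * R = 0" using char_crit ev by auto
    moreover have "(\<sigma> - A) * A * R \<ge> 0" using s1 A R by simp
    ultimately show False using s1 A by linarith
  qed
  ultimately show ?thesis by simp
qed



lemma Hpos:
  assumes A: "A > 0" and R: "R > 0" and sg: "\<sigma> < 0" and kK: "A - \<sigma> + 1 - \<sigma> / (R * A) \<le> k"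
  shows "Hf A \<sigma> R k > 0"
proof -
  define a where "a = exp (k * R)"
  define b where "b = exp (- (k * R))"
  define P where "P = (k + A) * (k - (A - \<sigma>))"
  have q: "- \<sigma> / (R * A) > 0" using A R sg by (simp add: divide_neg_pos)
  have k0: "k > 0" using kK q A sg by linarith
  have hid: "2 * Hf A \<sigma> R k = a * P + b * (2 * \<sigma> * k - P)"
    by (simp add: Hf_def cosh_field_def sinh_field_def a_def b_def P_def field_simps power2_eq_square)
  have ab: "a * b = 1" by (simp add: a_def b_def exp_minus)
  have ap: "a > 0" by (simp add: a_def)
  have a2: "a * a \<ge> 1 + 2 * k * R"
  proof -
    have "a * a = exp (2 * k * R)" by (simp add: a_def exp_add[symmetric])
    then show ?thesis using exp_ge_add_one_self[of "2 * k * R"] by simp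
  qed
  have d: "k - (A - \<sigma>) \<ge> 1 - \<sigma> / (R * A)" using kK by linarith
  have d0: "k - (A - \<sigma>) \<ge> 0" using d q by linarith
  have Pge: "P \<ge> A * (k - (A - \<sigma>))" unfolding P_def
    using k0 d0 by (intro mult_right_mono) auto
  have P0: "P \<ge> 0" using Pge A d0 by (smt (verit) mult_nonneg_nonneg)
  have "R * P \<ge> R * (A * (k - (A - \<sigma>)))" using Pge R by (simp add: mult_left_mono)
  also have "R * (A * (k - (A - \<sigma>))) \<ge> R * A * (1 - \<sigma> / (R * A))"
    using d A R by (simp add: mult.assoc mult_left_mono)
  also have "R * A * (1 - \<sigma> / (R * A)) = R * A - \<sigma>" using A R by (simp add: field_simps)
  finally have RP: "R * P + \<sigma> \<ge> R * A" by linarith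
  have RA: "R * A > 0" using A R by simp
  have "a * (a * P + b * (2 * \<sigma> * k - P)) = a * a * P + 2 * \<sigma> * k - P"
    using ab by (simp add: algebra_simps)
  also have "\<dots> \<ge> (1 + 2 * k * R) * P + 2 * \<sigma> * k - P"
    using mult_right_mono[OF a2 P0] by linarith
  also have "(1 + 2 * k * R) * P + 2 * \<sigma> * k - P = 2 * k * (R * P + \<sigma>)" by (simp add: algebra_simps)
  finally have fin: "a * (a * P + b * (2 * \<sigma> * k - P)) \<ge> 2 * k * (R * P + \<sigma>)" .
  have "R * P + \<sigma> > 0" using RP RA by linarith
  then have "2 * k * (R * P + \<sigma>) > 0" using k0 by simp
  then have "a * (a * P + b * (2 * \<sigma> * k - P)) > 0" using fin by linarith
  then have "a * P + b * (2 * \<sigma> * k - P) > 0" using ap by (simp add: zero_less_mult_iff)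
  then show ?thesis using hid by linarith
qed

lemma Hneg:
  assumes A: "A > 0" and sg: "\<sigma> < 0"
  shows "Hf A \<sigma> R (A - \<sigma>) < 0"
proof -
  have "Hf A \<sigma> R (A - \<sigma>) = \<sigma> * (A - \<sigma>) * (cosh ((A - \<sigma>) * R) - sinh ((A - \<sigma>) * R))"
    by (simp add: Hf_def power2_eq_square algebra_simps)
  also have "\<dots> = \<sigma> * (A - \<sigma>) * exp (- ((A - \<sigma>) * R))" by (simp add: cosh_minus_sinh)
  finally show ?thesis using A sg by (simp add: mult_neg_pos)
qed

lemma part_b:
  assumes A: "A > 0" and R: "R > 0" and sg: "\<sigma> < 0"
  shows "first_eigenvalue A R \<sigma> \<le> 2 * A * \<sigma> - \<sigma>^2"
proof -
  define K where "K = A - \<sigma> + 1 - \<sigma> / (R * A)"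
  have q: "- \<sigma> / (R * A) > 0" using A R sg by (simp add: divide_neg_pos)
  have K0: "K > 0" "A - \<sigma> \<le> K" unfolding K_def using q A sg by linarith+
  have bdd: "bdd_below {lam. is_eigenvalue A R \<sigma> lam}"
  proof (rule bdd_belowI)
    fix lam assume "lam \<in> {lam. is_eigenvalue A R \<sigma> lam}"
    then have ev: "is_eigenvalue A R \<sigma> lam" by simp
    show "A^2 - K^2 \<le> lam"
    proof (rule ccontr)
      assume "\<not> A^2 - K^2 \<le> lam"
      then have l: "lam < A^2 - K^2" by simp
      moreover have "0 \<le> K^2" by simp
      ultimately have l2: "lam < A^2" by linarith
      define k where "k = sqrt (A^2 - lam)"
      have nn: "0 \<le> A^2 - lam" using l2 by linarith
      then have "k^2 = A^2 - lam" unfolding k_def by (rule real_sqrt_pow2)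
      then have "K^2 < k^2" using l by simp
      moreover have "0 \<le> k" unfolding k_def using nn by simp
      ultimately have "K < k" by (rule power_less_imp_less_base)
      then have "Hf A \<sigma> R k > 0" using Hpos[OF A R sg] unfolding K_def by simp
      moreover have "Hf A \<sigma> R k = 0" using char_hyp[OF ev l2] unfolding k_def .
      ultimately show False by simp
    qed
  qed
  have cont: "continuous_on {A - \<sigma>..K} (Hf A \<sigma> R)" unfolding Hf_def by (intro continuous_intros)
  have "Hf A \<sigma> R (A - \<sigma>) \<le> 0" using Hneg[OF A sg, of R] by simp
  moreover have "0 \<le> Hf A \<sigma> R K" using Hpos[OF A R sg, of K] unfolding K_def by simp
  ultimately obtain k where k: "A - \<sigma> \<le> k" "k \<le> K" "Hf A \<sigma> R k = 0"
    using IVT'[of "Hf A \<sigma> R" "A - \<sigma>" 0 K, OF _ _ K0(2) cont] by auto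
  have kp: "k > 0" using k A sg by linarith
  have ev: "is_eigenvalue A R \<sigma> (A^2 - k^2)" using intro_hyp[of R k A \<sigma>] R kp k by simp
  have "(A - \<sigma>)^2 \<le> k^2" using k A sg by (intro power_mono) auto
  moreover have "2 * A * \<sigma> - \<sigma>^2 = A^2 - (A - \<sigma>)^2" by (simp add: power2_diff algebra_simps)
  ultimately have le: "A^2 - k^2 \<le> 2 * A * \<sigma> - \<sigma>^2" by linarith
  show ?thesis unfolding first_eigenvalue_def
    by (rule cInf_lower2[OF _ le bdd]) (use ev in simp)
qed



lemma k_sq_bound:
  fixes k a bb :: real
  assumes "k > 0" "k > a - bb" "a > 0" "bb \<ge> 0"
  shows "k^2 \<ge> a^2 - 2 * a * bb"
proof (cases "a - bb \<le> 0")
  case True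
  then have "a^2 - 2 * a * bb \<le> 0" using assms
    by (simp add: power2_eq_square)
  then show ?thesis by (smt (verit) zero_le_power2)
next
  case False
  then have "(a - bb)^2 \<le> k^2" using assms by (intro power_mono) auto
  moreover have "(a - bb)^2 = a^2 - 2 * a * bb + bb^2" by (simp add: power2_diff)
  moreover have "0 \<le> bb^2" by simp
  ultimately show ?thesis by linarith
qed

lemma part_c_ev:
  assumes A: "A > 0" and sg: "\<sigma> > A" and m: "m = A * (\<sigma> - A)"
    and R: "R \<ge> 1 + 2 * pi^2 / m" and ev: "is_eigenvalue A R \<sigma> lam"
  shows "lam \<ge> A^2 + pi^2 / R^2 - (4 * \<sigma> * pi^2 / m) / R^3"
proof -
  have m0: "m > 0" using A sg m by simp
  have R1: "R \<ge> 1" using R m0 by (smt (verit) divide_nonneg_pos zero_le_power2)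
  have R0: "R > 0" using R1 by simp
  have l: "lam > A^2" using part_a2'[OF A R0 _ ev] sg by simp
  define k where "k = sqrt (lam - A^2)"
  have nn: "0 \<le> lam - A^2" using l by linarith
  have k0: "k > 0" unfolding k_def using l by simp
  have lk: "lam = A^2 + k^2" unfolding k_def using real_sqrt_pow2[OF nn] by simp
  have J: "Jf A \<sigma> R k = 0" using char_trig[OF ev l] unfolding k_def .
  have c0: "(4 * \<sigma> * pi^2 / m) / R^3 \<ge> 0" using m0 R0 sg A by simp
  have "k^2 \<ge> pi^2 / R^2 - (4 * \<sigma> * pi^2 / m) / R^3"
  proof (cases "k \<ge> pi / R")
    case True
    then have "(pi / R)^2 \<le> k^2" using R0 by (intro power_mono) auto
    then show ?thesis using c0 by (simp add: power_divide)
  next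
    case False
    then have kpi: "k < pi / R" by simp
    then have kR: "k * R < pi" using R0 by (simp add: less_divide_eq)
    have kR0: "k * R > 0" using k0 R0 by simp
    have "R * R \<ge> R * 1" using R1 R0 by (intro mult_left_mono) auto
    then have RR: "R^2 \<ge> 2 * pi^2 / m" using R by (simp add: power2_eq_square)
    have "pi^2 / R^2 \<le> m / 2"
    proof -
      have "2 * pi^2 \<le> m * R^2" using RR m0 by (simp add: divide_le_eq mult.commute)
      then show ?thesis using R0 by (simp add: divide_le_eq field_simps)
    qed
    moreover have "k^2 < (pi / R)^2" using kpi k0 by (intro power_strict_mono) auto
    moreover have "(pi / R)^2 = pi^2 / R^2" by (simp add: power_divide)
    ultimately have km: "k^2 < m / 2" by linarith
    have sinp: "sin (k * R) > 0" using kR0 kR by (rule sin_gt_zero)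
    have Jm: "\<sigma> * k * cos (k * R) + (m - k^2) * sin (k * R) = 0"
      using J unfolding Jf_def m by (simp add: algebra_simps power2_eq_square)
    have mk: "m - k^2 > 0" using km m0 by linarith
    have cneg: "cos (k * R) < 0"
    proof (rule ccontr)
      assume "\<not> cos (k * R) < 0"
      then have "\<sigma> * k * cos (k * R) \<ge> 0" using sg A k0 by simp
      moreover have "(m - k^2) * sin (k * R) > 0" using mk sinp by simp
      ultimately show False using Jm by linarith
    qed
    have kRpi2: "k * R > pi / 2"
    proof (rule ccontr)
      assume "\<not> k * R > pi / 2"
      then have "cos (k * R) \<ge> 0" using kR0 by (intro cos_ge_zero) auto
      then show False using cneg by simp
    qed
    define th where "th = pi - k * R"
    have th0: "0 < th" "th < pi / 2" unfolding th_def using kR kRpi2 by auto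
    have costh: "cos th = - cos (k * R)" "sin th = sin (k * R)" unfolding th_def by simp_all
    have cpos: "cos th > 0" using costh cneg by simp
    have "\<bar>th\<bar> \<le> \<bar>tan th\<bar>" using th0 by (intro abs_tan_ge) auto
    moreover have "tan th = sin th / cos th" by (simp add: tan_def)
    moreover have "sin th > 0" using costh sinp by simp
    ultimately have "th \<le> sin th / cos th" using th0 cpos by simp
    then have thc: "th * cos th \<le> sin th" using cpos by (simp add: le_divide_eq)
    have "(m - k^2) * sin th = \<sigma> * k * cos th" using Jm costh by (simp add: algebra_simps)
    moreover have "(m - k^2) * (th * cos th) \<le> (m - k^2) * sin th"
      using thc mk by (intro mult_left_mono) auto
    ultimately have "((m - k^2) * th) * cos th \<le> (\<sigma> * k) * cos th" by (simp add: algebra_simps)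
    then have t1: "(m - k^2) * th \<le> \<sigma> * k" using cpos by simp
    have "(m / 2) * th \<le> (m - k^2) * th" using km th0 by (intro mult_right_mono) auto
    also have "\<dots> \<le> \<sigma> * k" by (rule t1)
    also have "\<dots> < \<sigma> * (pi / R)" using kpi sg A by (intro mult_strict_left_mono) auto
    finally have "(m / 2) * th < \<sigma> * (pi / R)" .
    then have thb: "th < 2 * \<sigma> * pi / (m * R)" using m0 R0 by (simp add: field_simps)
    have "k * R = pi - th" unfolding th_def by simp
    then have "k * R > pi - 2 * \<sigma> * pi / (m * R)" using thb by linarith
    then have kgt: "k > pi / R - 2 * \<sigma> * pi / (m * R^2)" using R0 m0
      by (simp add: field_simps power2_eq_square)
    have "k^2 \<ge> (pi / R)^2 - 2 * (pi / R) * (2 * \<sigma> * pi / (m * R^2))"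
      by (rule k_sq_bound[OF k0 kgt]) (use R0 m0 sg A in auto)
    moreover have "2 * (pi / R) * (2 * \<sigma> * pi / (m * R^2)) = (4 * \<sigma> * pi^2 / m) / R^3"
      using R0 m0 by (simp add: field_simps power2_eq_square power3_eq_cube)
    ultimately show ?thesis by (simp add: power_divide)
  qed
  then show ?thesis using lk by linarith
qed


theorem lemma6p1:
  fixes A \<sigma> :: real
  assumes "A > 0"
  shows "(\<forall>R>0. (0 \<le> \<sigma> \<and> \<sigma> \<le> A \<longrightarrow> first_eigenvalue A R \<sigma> \<ge> 2 * \<sigma> * A - \<sigma>^2) \<and>
                 (\<sigma> \<ge> A \<longrightarrow> first_eigenvalue A R \<sigma> \<ge> A^2))
       \<and> (\<sigma> < 0 \<longrightarrow> (\<forall>R>0. first_eigenvalue A R \<sigma> \<le> 2 * A * \<sigma> - \<sigma>^2))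
       \<and> (\<sigma> > A \<longrightarrow> (\<exists>R0>0. \<exists>c0>0. \<forall>R\<ge>R0.
              first_eigenvalue A R \<sigma> \<ge> A^2 + pi^2 / R^2 - c0 / R^3))"
proof (intro conjI allI impI)
  fix R :: real assume R: "R > 0"
  have ne: "{lam. is_eigenvalue A R \<sigma> lam} \<noteq> {}" using ev_exists[OF R, of A \<sigma>] by auto
  {
    assume s: "0 \<le> \<sigma> \<and> \<sigma> \<le> A"
    show "first_eigenvalue A R \<sigma> \<ge> 2 * \<sigma> * A - \<sigma>^2"
      unfolding first_eigenvalue_def
      by (rule cInf_greatest[OF ne]) (use part_a1[OF assms R] s in auto)
  }
  {
    assume s: "\<sigma> \<ge> A"
    show "first_eigenvalue A R \<sigma> \<ge> A^2"
      unfolding first_eigenvalue_def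
      by (rule cInf_greatest[OF ne]) (use part_a2[OF assms R s] in auto)
  }
next
  fix R :: real assume s: "\<sigma> < 0" and R: "R > 0"
  show "first_eigenvalue A R \<sigma> \<le> 2 * A * \<sigma> - \<sigma>^2" by (rule part_b[OF assms R s])
next
  assume s: "\<sigma> > A"
  define m where "m = A * (\<sigma> - A)"
  have m0: "m > 0" unfolding m_def using assms s by simp
  define R0 where "R0 = 1 + 2 * pi^2 / m"
  have R00: "R0 > 0" unfolding R0_def using m0 by (simp add: add_pos_nonneg)
  have c00: "4 * \<sigma> * pi^2 / m > 0" using m0 s assms by simp
  have main: "\<forall>R\<ge>R0. first_eigenvalue A R \<sigma> \<ge> A^2 + pi^2 / R^2 - (4 * \<sigma> * pi^2 / m) / R^3"
  proof (intro allI impI)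
    fix R :: real assume R: "R \<ge> R0"
    then have Rp: "R > 0" using R00 by simp
    have ne: "{lam. is_eigenvalue A R \<sigma> lam} \<noteq> {}" using ev_exists[OF Rp, of A \<sigma>] by auto
    have RR: "R \<ge> 1 + 2 * pi^2 / m" using R unfolding R0_def .
    show "first_eigenvalue A R \<sigma> \<ge> A^2 + pi^2 / R^2 - (4 * \<sigma> * pi^2 / m) / R^3"
      unfolding first_eigenvalue_def
      by (rule cInf_greatest[OF ne]) (use part_c_ev[OF assms s m_def RR] in auto)
  qed
  show "\<exists>R0>0. \<exists>c0>0. \<forall>R\<ge>R0. first_eigenvalue A R \<sigma> \<ge> A^2 + pi^2 / R^2 - c0 / R^3"
    using main R00 c00 by blast
qed

end
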